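(* For every unitary $U$ on $\mathbb C^2\otimes\mathbb C^2$ and every unit vector $|\beta\rangle\in\mathbb C^2$, there exists a unit vector $|\alpha\rangle\in\mathbb C^2$ and density operators $\alpha',\beta'$ on $\mathbb C^2$ such that $U(|\alpha\rangle\langle\alpha|\otimes|\beta\rangle\langle\beta|)U^\dagger=\alpha'\otimes\beta'$. *)

theory Defs
  imports "HOL-Analysis.Analysis" "HOL-Library.Complex_Order"
begin

text \<open>Vectors in C^2 are \<open>complex^2\<close>; operators on C^2 are \<open>complex^2^2\<close>;
  operators on C^2 (x) C^2 are matrices indexed by the product type \<open>2 \<times> 2\<close>.\<close>

definition adjointM :: "complex^'n^'m \<Rightarrow> complex^'m^'n" where
  "adjointM A = (\<chi> i j. cnj (A $ j $ i))"

definition unitaryM :: "complex^'n^'n \<Rightarrow> bool" where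
  "unitaryM U \<longleftrightarrow> U ** adjointM U = mat 1 \<and> adjointM U ** U = mat 1"

definition outer :: "complex^'n \<Rightarrow> complex^'n^'n" where
  "outer v = (\<chi> i j. v $ i * cnj (v $ j))"

definition kron :: "complex^'n^'n \<Rightarrow> complex^'m^'m \<Rightarrow> complex^('n \<times> 'm)^('n \<times> 'm)" where
  "kron A B = (\<chi> p q. A $ fst p $ fst q * B $ snd p $ snd q)"

text \<open>Density operator: Hermitian, positive semidefinite, trace one.
  (\<open>0 \<le> z\<close> on complex numbers means z is real and nonnegative.)\<close>
definition density_op :: "complex^'n^'n \<Rightarrow> bool" where
  "density_op A \<longleftrightarrow> adjointM A = A
     \<and> (\<forall>v. 0 \<le> (\<Sum>i\<in>UNIV. cnj (v $ i) * (A *v v) $ i))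
     \<and> trace A = 1"

end

theory Submission
  imports Defs
begin

definition tensor :: "complex^'n \<Rightarrow> complex^'m \<Rightarrow> complex^('n \<times> 'm)" where
  "tensor a b = (\<chi> p. a $ fst p * b $ snd p)"

lemma kron_outer: "kron (outer a) (outer b) = outer (tensor a b)"
  by (simp add: vec_eq_iff kron_def outer_def tensor_def)

lemma conj_outer: "U ** outer w ** adjointM U = outer (U *v w)"
proof -
  have "(U ** outer w ** adjointM U) $ i $ j = (U *v w) $ i * cnj ((U *v w) $ j)" for i j
  proof -
    have "(U ** outer w ** adjointM U) $ i $ j
        = (\<Sum>l\<in>UNIV. (\<Sum>k\<in>UNIV. U $ i $ k * (w $ k * cnj (w $ l))) * cnj (U $ j $ l))"
      by (simp add: matrix_matrix_mult_def outer_def adjointM_def)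
    also have "\<dots> = (\<Sum>l\<in>UNIV. \<Sum>k\<in>UNIV. (U $ i $ k * w $ k) * cnj (U $ j $ l * w $ l))"
      by (rule sum.cong[OF refl]) (simp only: sum_distrib_right, rule sum.cong[OF refl], simp add: mult_ac)
    also have "\<dots> = (\<Sum>k\<in>UNIV. \<Sum>l\<in>UNIV. (U $ i $ k * w $ k) * cnj (U $ j $ l * w $ l))"
      by (rule sum.swap)
    also have "\<dots> = (\<Sum>k\<in>UNIV. U $ i $ k * w $ k) * (\<Sum>l\<in>UNIV. cnj (U $ j $ l * w $ l))"
      by (rule sum_product[symmetric])
    also have "\<dots> = (\<Sum>k\<in>UNIV. U $ i $ k * w $ k) * cnj (\<Sum>l\<in>UNIV. U $ j $ l * w $ l)"
      by (simp only: cnj_sum)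
    finally show ?thesis by (simp add: matrix_vector_mult_def)
  qed
  then show ?thesis by (simp add: vec_eq_iff outer_def)
qed

lemma trace_kron: "trace (kron A B) = trace A * trace B"
  unfolding trace_def kron_def
  by (simp add: sum_product sum.cartesian_product split_def)

lemma trace_conj:
  assumes "unitaryM U"
  shows "trace (U ** X ** adjointM U) = trace X"
proof -
  have "trace (U ** X ** adjointM U) = trace (adjointM U ** (U ** X))"
    by (rule trace_mul_sym)
  also have "adjointM U ** (U ** X) = (adjointM U ** U) ** X"
    by (simp only: matrix_mul_assoc)
  also have "\<dots> = X"
    using assms unfolding unitaryM_def by (simp only: matrix_mul_lid)
  finally show ?thesis .
qed

lemma trace_outer: "trace (outer a) = complex_of_real ((norm a)^2)"
proof -
  have "trace (outer a) = (\<Sum>i\<in>UNIV. complex_of_real ((cmod (a $ i))^2))"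
    unfolding trace_def outer_def by (simp add: complex_norm_square[symmetric])
  also have "\<dots> = complex_of_real ((norm a)^2)"
    by (simp add: norm_vec_def L2_set_def sum_nonneg)
  finally show ?thesis .
qed

lemma cnj_mult_self: "cnj z * z = complex_of_real ((cmod z)^2)"
  by (metis complex_norm_square mult.commute)

lemma density_outer:
  assumes "trace (outer a) = 1"
  shows "density_op (outer a)"
proof -
  have "0 \<le> (\<Sum>i\<in>UNIV. cnj (v $ i) * (outer a *v v) $ i)" for v
  proof -
    have "(\<Sum>i\<in>UNIV. cnj (v $ i) * (outer a *v v) $ i)
        = (\<Sum>i\<in>UNIV. cnj (v $ i) * a $ i) * (\<Sum>j\<in>UNIV. cnj (a $ j) * v $ j)"
      apply (simp add: outer_def matrix_vector_mult_def sum_distrib_left sum_distrib_right)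
      apply (subst sum.swap)
      apply (simp add: mult_ac)
      done
    also have "\<dots> = cnj (\<Sum>j\<in>UNIV. cnj (a $ j) * v $ j) * (\<Sum>j\<in>UNIV. cnj (a $ j) * v $ j)"
      by (simp add: cnj_sum mult_ac)
    also have "\<dots> = complex_of_real ((cmod (\<Sum>j\<in>UNIV. cnj (a $ j) * v $ j))^2)"
      by (rule cnj_mult_self)
    finally show ?thesis by (simp add: less_eq_complex_def del: of_real_power)
  qed
  then show ?thesis using assms
    unfolding density_op_def by (simp add: adjointM_def outer_def vec_eq_iff mult.commute)
qed

lemma forall_pair2: "(\<forall>p::2\<times>2. P p) \<longleftrightarrow> P (1,1) \<and> P (1,2) \<and> P (2,1) \<and> P (2,2)"
  unfolding split_paired_All forall_2 by blast

lemma prod_crit: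
  fixes v :: "complex^(2\<times>2)"
  assumes h: "v$(1,1) * v$(2,2) = v$(1,2) * v$(2,1)"
  shows "\<exists>a b. v = tensor a b"
proof (cases "v$(1,1) = 0")
  case False
  have "v = tensor (vector [v$(1,1), v$(2,1)]) (vector [1, v$(1,2)/v$(1,1)])"
    unfolding vec_eq_iff forall_pair2 using False h
    by (simp add: tensor_def vector_2 field_simps)
  then show ?thesis by blast
next
  case True
  then have "v$(1,2) = 0 \<or> v$(2,1) = 0" using h by simp
  then show ?thesis
  proof
    assume z: "v$(1,2) = 0"
    have "v = tensor (vector [0, 1]) (vector [v$(2,1), v$(2,2)])"
      unfolding vec_eq_iff forall_pair2 using True z
      by (simp add: tensor_def vector_2)
    then show ?thesis by blast
  next
    assume z: "v$(2,1) = 0"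
    have "v = tensor (vector [v$(1,2), v$(2,2)]) (vector [0, 1])"
      unfolding vec_eq_iff forall_pair2 using True z
      by (simp add: tensor_def vector_2)
    then show ?thesis by blast
  qed
qed

lemma quad_root:
  fixes c1 c2 c3 :: complex
  shows "\<exists>x y. (x, y) \<noteq> (0, 0) \<and> c1*x^2 + c2*x*y + c3*y^2 = 0"
proof (cases "c1 = 0")
  case True
  then show ?thesis by (intro exI[of _ 1] exI[of _ 0]) simp
next
  case False
  define s where "s = csqrt (c2^2 - 4*c1*c3)"
  define x where "x = (-c2 + s) / (2*c1)"
  have s2: "s^2 = c2^2 - 4*c1*c3" by (simp add: s_def)
  have e: "2*c1*x + c2 = s" using False by (simp add: x_def field_simps)
  have "4*c1*(c1*x^2 + c2*x + c3) = (2*c1*x + c2)^2 - c2^2 + 4*c1*c3"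
    by (simp add: algebra_simps power2_eq_square)
  also have "\<dots> = 0" using e s2 by simp
  finally have "c1*x^2 + c2*x + c3 = 0" using False by simp
  then show ?thesis by (intro exI[of _ x] exI[of _ 1]) simp
qed

lemma exists_alpha:
  fixes U :: "complex^(2 \<times> 2)^(2 \<times> 2)" and \<beta> :: "complex^2"
  shows "\<exists>\<alpha>::complex^2. norm \<alpha> = 1 \<and>
    (U *v tensor \<alpha> \<beta>)$(1,1) * (U *v tensor \<alpha> \<beta>)$(2,2) = (U *v tensor \<alpha> \<beta>)$(1,2) * (U *v tensor \<alpha> \<beta>)$(2,1)"
proof -
  define P where "P p = (\<Sum>j\<in>UNIV. U$p$(1,j) * \<beta>$j)" for p
  define Q where "Q p = (\<Sum>j\<in>UNIV. U$p$(2,j) * \<beta>$j)" for p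
  have lin: "(U *v tensor \<alpha> \<beta>)$p = \<alpha>$1 * P p + \<alpha>$2 * Q p" for \<alpha> :: "complex^2" and p
  proof -
    have "(U *v tensor \<alpha> \<beta>)$p = (\<Sum>q\<in>UNIV \<times> UNIV. U$p$q * (\<alpha>$fst q * \<beta>$snd q))"
      by (simp add: matrix_vector_mult_def tensor_def)
    also have "\<dots> = (\<Sum>i\<in>UNIV. \<Sum>j\<in>UNIV. U$p$(i,j) * (\<alpha>$i * \<beta>$j))"
      by (simp add: sum.cartesian_product split_def)
    also have "\<dots> = \<alpha>$1 * P p + \<alpha>$2 * Q p"
      by (simp add: sum_2 P_def Q_def algebra_simps)
    finally show ?thesis .
  qed
  define D where "D x y = (x*P(1,1)+y*Q(1,1))*(x*P(2,2)+y*Q(2,2)) - (x*P(1,2)+y*Q(1,2))*(x*P(2,1)+y*Q(2,1))" for x y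
  define c1 where "c1 = P(1,1)*P(2,2) - P(1,2)*P(2,1)"
  define c2 where "c2 = P(1,1)*Q(2,2) + Q(1,1)*P(2,2) - P(1,2)*Q(2,1) - Q(1,2)*P(2,1)"
  define c3 where "c3 = Q(1,1)*Q(2,2) - Q(1,2)*Q(2,1)"
  have Dexp: "D x y = c1*x^2 + c2*x*y + c3*y^2" for x y
    by (simp add: D_def c1_def c2_def c3_def algebra_simps power2_eq_square)
  obtain x y where xy: "(x, y) \<noteq> (0, 0)" and D0: "D x y = 0"
    using quad_root[of c1 c2 c3] Dexp by metis
  define a0 :: "complex^2" where "a0 = vector [x, y]"
  have a0c: "a0$1 = x" "a0$2 = y" by (simp_all add: a0_def vector_2)
  have "a0 \<noteq> 0" using xy by (auto simp: a0_def vec_eq_iff forall_2 vector_2)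
  then have n0: "norm a0 \<noteq> 0" by simp
  define c where "c = complex_of_real (1 / norm a0)"
  define \<alpha> where "\<alpha> = (1 / norm a0) *\<^sub>R a0"
  have n1: "norm \<alpha> = 1" using n0 by (simp add: \<alpha>_def)
  have a1: "\<alpha>$1 = c*x" and a2: "\<alpha>$2 = c*y"
    using a0c by (simp_all add: \<alpha>_def) (simp_all add: c_def scaleR_conv_of_real)
  have "D (c*x) (c*y) = c^2 * D x y"
    by (simp add: D_def algebra_simps power2_eq_square)
  then have "D (c*x) (c*y) = 0" using D0 by simp
  then have "(U *v tensor \<alpha> \<beta>)$(1,1) * (U *v tensor \<alpha> \<beta>)$(2,2) = (U *v tensor \<alpha> \<beta>)$(1,2) * (U *v tensor \<alpha> \<beta>)$(2,1)"
    unfolding lin a1 a2 D_def by simp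
  then show ?thesis using n1 by blast
qed

theorem theorem6:
  fixes U :: "complex^(2 \<times> 2)^(2 \<times> 2)" and \<beta> :: "complex^2"
  assumes "unitaryM U" and "norm \<beta> = 1"
  shows "\<exists>(\<alpha>::complex^2) (\<alpha>'::complex^2^2) (\<beta>'::complex^2^2).
           norm \<alpha> = 1 \<and> density_op \<alpha>' \<and> density_op \<beta>' \<and>
           U ** kron (outer \<alpha>) (outer \<beta>) ** adjointM U = kron \<alpha>' \<beta>'"
proof -
  obtain \<alpha> :: "complex^2" where n\<alpha>: "norm \<alpha> = 1" and det:
    "(U *v tensor \<alpha> \<beta>)$(1,1) * (U *v tensor \<alpha> \<beta>)$(2,2) = (U *v tensor \<alpha> \<beta>)$(1,2) * (U *v tensor \<alpha> \<beta>)$(2,1)"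
    using exists_alpha by blast
  define v where "v = U *v tensor \<alpha> \<beta>"
  obtain a b where vab: "v = tensor a b" using prod_crit det unfolding v_def by blast
  have key: "U ** kron (outer \<alpha>) (outer \<beta>) ** adjointM U = outer v"
    by (simp add: kron_outer conj_outer v_def)
  have tv: "trace (outer v) = 1"
  proof -
    have "trace (outer v) = trace (kron (outer \<alpha>) (outer \<beta>))"
      using trace_conj[OF assms(1)] key by metis
    also have "\<dots> = 1" using n\<alpha> assms(2) by (simp add: trace_kron trace_outer)
    finally show ?thesis .
  qed
  have tab: "trace (outer a) * trace (outer b) = 1"
    using tv vab by (simp add: trace_kron[symmetric] kron_outer)
  have na: "norm a \<noteq> 0" using tab by (auto simp: trace_outer)
  define a' where "a' = (1 / norm a) *\<^sub>R a"
  define b' where "b' = norm a *\<^sub>R b"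
  have tt: "tensor a' b' = tensor a b"
    using na by (simp add: a'_def b'_def tensor_def vec_eq_iff)
  have ta: "trace (outer a') = 1" using na by (simp add: a'_def trace_outer)
  have "trace (outer a') * trace (outer b') = 1"
    using tab tt by (metis trace_kron kron_outer)
  then have tb: "trace (outer b') = 1" using ta by simp
  have "U ** kron (outer \<alpha>) (outer \<beta>) ** adjointM U = kron (outer a') (outer b')"
    using key vab tt by (simp add: kron_outer)
  then show ?thesis using n\<alpha> density_outer[OF ta] density_outer[OF tb] by blast
qed

end
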